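(* Let $(G,\mathcal{A})$ be a local convergence pairing on $X$ and $A,B\in\mathcal{A}$ with $A\cap B\neq\emptyset$. If $(f_i)\subset G$ acts as a convergence sequence on both $A$ and $B$, and $n$ is the repeller and $p$ the attractor of $(f_i)$ in its action on $A$, then $p$ is the attractor and $n$ the repeller of $(f_i)$ in its action on $B$.
   Context: $X$ is a Peano continuum (compact, connected, locally connected metric space) without cut points and $G$ acts on $X$ by homeomorphisms; $\mathcal{A}$ is a $G$-invariant collection of closed subsets of $X$; $\mathrm{Stab}(A)=\{g\in G:g(A)=A\}$. For a closed $S\subset X$ and connected $B,C\subset X\setminus S$, $S$ separates $B$ from $C$ if they lie in different components of $X\setminus S$; $S$ separates $Y$ if it separates two points of $Y$. Closed sets $A,B$ cross if $A\cap B\neq\emptyset$ or ($A$ separates $B$ and $B$ separates $A$). A crossing sequence is $A_1,\dots,A_n$ with $A_i$ crossing $A_{i+1}$ for $1\le i<n$. $g_i(S)\to p$ means every neighborhood of $p$ contains $g_i(S)$ for all large $i$. A sequence of homeomorphisms $(g_i)$ of $Y$ is a convergence sequence on $Y$ with repeller $n$ and attractor $p$ if $g_i(C)\to p$ for every compact $C\subset Y\setminus\{n\}$; a sequence in $G$ acting as a convergence sequence on $A\in\mathcal{A}$ means its elements preserve $A$ and their restrictions form a convergence sequence on $A$. A group acts as a convergence group on $Y$ if every sequence of distinct elements has a subsequence that is a convergence sequence on $Y$. $(G,\mathcal{A})$ is a local convergence pairing on $X$ if: (1) $|A|>2$ for all $A\in\mathcal{A}$; (2) for each $\epsilon>0$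 only finitely many $A\in\mathcal{A}$ have diameter $>\epsilon$; (3) for any $x,y\in X$ some finite $\mathcal{B}\subset\mathcal{A}$ has $\bigcup\mathcal{B}$ separating $x$ from $y$; (4) each $\mathrm{Stab}(A)$ acts as a convergence group on $A$; (5) for any $A,B\in\mathcal{A}$ with $|A\cap B|\le 2$: if $A\cap B=\{c\}$ then for any $b\in B\setminus\{c\}$ there is a finite crossing sequence $A,A_1,\dots,A_n,B$ in $\mathcal{A}$ with $\{b,c\}\cap A_i=\emptyset$ for $1\le i\le n$; if $|A\cap B|\ne1$ there is a crossing sequence $A,A_1,\dots,A_n,B$ in $\mathcal{A}$ with $(A\cap B)\cap A_i=\emptyset$ for $1\le i\le n$. *)

theory Defs
  imports "HOL-Analysis.Analysis" "HOL-Algebra.Group"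
begin

definition peano_continuum :: "'a::metric_space set \<Rightarrow> bool" where
  "peano_continuum X \<longleftrightarrow> X \<noteq> {} \<and> compact X \<and> connected X \<and> locally connected X"

definition cut_point :: "'a::topological_space set \<Rightarrow> 'a \<Rightarrow> bool" where
  "cut_point X x \<longleftrightarrow> x \<in> X \<and> \<not> connected (X - {x})"

definition acts_by_homeos :: "('g, 'm) monoid_scheme \<Rightarrow> ('g \<Rightarrow> 'a::topological_space \<Rightarrow> 'a) \<Rightarrow> 'a set \<Rightarrow> bool" where
  "acts_by_homeos G act X \<longleftrightarrow> group G \<and>
     (\<forall>g\<in>carrier G. homeomorphism X X (act g) (act (inv\<^bsub>G\<^esub> g))) \<and>
     (\<forall>x\<in>X. act \<one>\<^bsub>G\<^esub> x = x) \<and>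
     (\<forall>g\<in>carrier G. \<forall>h\<in>carrier G. \<forall>x\<in>X. act (g \<otimes>\<^bsub>G\<^esub> h) x = act g (act h x))"

definition separates_from :: "'a::topological_space set \<Rightarrow> 'a set \<Rightarrow> 'a set \<Rightarrow> 'a set \<Rightarrow> bool" where
  "separates_from X S B C \<longleftrightarrow> B \<noteq> {} \<and> C \<noteq> {} \<and> B \<subseteq> X - S \<and> C \<subseteq> X - S \<and>
     (\<forall>b\<in>B. \<forall>c\<in>C. \<not> connected_component (X - S) b c)"

definition separates :: "'a::topological_space set \<Rightarrow> 'a set \<Rightarrow> 'a set \<Rightarrow> bool" where
  "separates X S Y \<longleftrightarrow> (\<exists>x\<in>Y. \<exists>y\<in>Y. separates_from X S {x} {y})"

definition cross :: "'a::topological_space set \<Rightarrow> 'a set \<Rightarrow> 'a set \<Rightarrow> bool" where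
  "cross X A B \<longleftrightarrow> A \<inter> B \<noteq> {} \<or> (separates X A B \<and> separates X B A)"

definition crossing_sequence :: "'a::topological_space set \<Rightarrow> 'a set list \<Rightarrow> bool" where
  "crossing_sequence X L \<longleftrightarrow> (\<forall>i. Suc i < length L \<longrightarrow> cross X (L ! i) (L ! Suc i))"

definition Stab :: "('g, 'm) monoid_scheme \<Rightarrow> ('g \<Rightarrow> 'a \<Rightarrow> 'a) \<Rightarrow> 'a set \<Rightarrow> 'g set" where
  "Stab G act A = {g \<in> carrier G. act g ` A = A}"

definition sets_converge_to :: "(nat \<Rightarrow> 'a::topological_space set) \<Rightarrow> 'a \<Rightarrow> bool" where
  "sets_converge_to S p \<longleftrightarrow> (\<forall>U. open U \<and> p \<in> U \<longrightarrow> (\<exists>N. \<forall>i\<ge>N. S i \<subseteq> U))"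

definition convergence_sequence_on ::
  "'a::topological_space set \<Rightarrow> (nat \<Rightarrow> 'a \<Rightarrow> 'a) \<Rightarrow> 'a \<Rightarrow> 'a \<Rightarrow> bool" where
  "convergence_sequence_on Y g n p \<longleftrightarrow> n \<in> Y \<and> p \<in> Y \<and>
     (\<forall>C. compact C \<and> C \<subseteq> Y - {n} \<longrightarrow> sets_converge_to (\<lambda>i. g i ` C) p)"

definition acts_as_convergence_sequence ::
  "('g, 'm) monoid_scheme \<Rightarrow> ('g \<Rightarrow> 'a::topological_space \<Rightarrow> 'a) \<Rightarrow> 'a set \<Rightarrow> (nat \<Rightarrow> 'g) \<Rightarrow> 'a \<Rightarrow> 'a \<Rightarrow> bool" where
  "acts_as_convergence_sequence G act A f n p \<longleftrightarrow>
     (\<forall>i. f i \<in> Stab G act A) \<and> convergence_sequence_on A (\<lambda>i. act (f i)) n p"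

definition acts_as_convergence_group ::
  "'g set \<Rightarrow> ('g \<Rightarrow> 'a::topological_space \<Rightarrow> 'a) \<Rightarrow> 'a set \<Rightarrow> bool" where
  "acts_as_convergence_group H act Y \<longleftrightarrow>
     (\<forall>f::nat \<Rightarrow> 'g. (\<forall>i. f i \<in> H) \<and> inj f \<longrightarrow>
        (\<exists>r::nat \<Rightarrow> nat. strict_mono r \<and>
           (\<exists>n p. convergence_sequence_on Y (\<lambda>i. act (f (r i))) n p)))"

definition local_convergence_pairing ::
  "'a::metric_space set \<Rightarrow> ('g, 'm) monoid_scheme \<Rightarrow> ('g \<Rightarrow> 'a \<Rightarrow> 'a) \<Rightarrow> 'a set set \<Rightarrow> bool" where
  "local_convergence_pairing X G act \<A> \<longleftrightarrow>
     peano_continuum X \<and> (\<forall>x. \<not> cut_point X x) \<and> acts_by_homeos G act X \<and>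
     (\<forall>A\<in>\<A>. closed A \<and> A \<subseteq> X) \<and>
     (\<forall>g\<in>carrier G. \<forall>A\<in>\<A>. act g ` A \<in> \<A>) \<and>
     \<comment> \<open>(1)\<close>
     (\<forall>A\<in>\<A>. infinite A \<or> 2 < card A) \<and>
     \<comment> \<open>(2)\<close>
     (\<forall>\<epsilon>>0. finite {A\<in>\<A>. diameter A > \<epsilon>}) \<and>
     \<comment> \<open>(3)\<close>
     (\<forall>x\<in>X. \<forall>y\<in>X. x \<noteq> y \<longrightarrow>
        (\<exists>\<B>. finite \<B> \<and> \<B> \<subseteq> \<A> \<and> separates_from X (\<Union>\<B>) {x} {y})) \<and>
     \<comment> \<open>(4)\<close>
     (\<forall>A\<in>\<A>. acts_as_convergence_group (Stab G act A) act A) \<and>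
     \<comment> \<open>(5)\<close>
     (\<forall>A\<in>\<A>. \<forall>B\<in>\<A>. finite (A \<inter> B) \<and> card (A \<inter> B) \<le> 2 \<longrightarrow>
        (\<forall>c. A \<inter> B = {c} \<longrightarrow> (\<forall>b\<in>B - {c}.
           \<exists>L. L \<noteq> [] \<and> set L \<subseteq> \<A> \<and> crossing_sequence X (A # L @ [B]) \<and>
               (\<forall>Ai\<in>set L. {b, c} \<inter> Ai = {}))) \<and>
        (card (A \<inter> B) \<noteq> 1 \<longrightarrow>
           (\<exists>L. L \<noteq> [] \<and> set L \<subseteq> \<A> \<and> crossing_sequence X (A # L @ [B]) \<and>
               (\<forall>Ai\<in>set L. (A \<inter> B) \<inter> Ai = {}))))"

end

theory Submission
  imports Defs
begin

lemma inf_subseq: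
  assumes "infinite {i::nat. P i}"
  obtains r :: "nat \<Rightarrow> nat" where "strict_mono r" "\<And>i. P (r i)"
proof -
  have "strict_mono (enumerate {i. P i})" by (rule strict_mono_enumerate[OF assms])
  moreover have "\<And>i. P (enumerate {i. P i} i)" using enumerate_in_set[OF assms] by simp
  ultimately show ?thesis using that[of "enumerate {i. P i}"] by blast
qed

lemma sets_conv_points:
  assumes "sets_converge_to S q" "\<And>i. x i \<in> S i"
  shows "x \<longlonglongrightarrow> q"
proof (rule topological_tendstoI)
  fix U assume "open U" "q \<in> U"
  then obtain N where N: "\<forall>i\<ge>N. S i \<subseteq> U" using assms(1) unfolding sets_converge_to_def by blast
  have "\<forall>i\<ge>N. x i \<in> U" using N assms(2) by blast
  then show "eventually (\<lambda>i. x i \<in> U) sequentially"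
    unfolding eventually_sequentially by blast
qed

lemma sets_conv_const_point:
  fixes q :: "'a::metric_space"
  assumes "sets_converge_to S q" "\<And>i. w \<in> S i"
  shows "w = q"
proof -
  have "(\<lambda>i. w) \<longlonglongrightarrow> q" using sets_conv_points[OF assms(1), of "\<lambda>i. w"] assms(2) by blast
  then show ?thesis using LIMSEQ_unique tendsto_const by blast
qed

lemma sets_conv_subseq:
  assumes "sets_converge_to S q" "strict_mono r"
  shows "sets_converge_to (\<lambda>i. S (r i)) q"
  unfolding sets_converge_to_def
proof (intro allI impI)
  fix U assume "open U \<and> q \<in> U"
  then obtain N where N: "\<forall>i\<ge>N. S i \<subseteq> U" using assms(1) unfolding sets_converge_to_def by blast
  have "\<forall>i\<ge>N. S (r i) \<subseteq> U"
  proof (intro allI impI)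
    fix i assume "N \<le> i"
    then have "N \<le> r i" using seq_suble[OF assms(2), of i] by linarith
    then show "S (r i) \<subseteq> U" using N by blast
  qed
  then show "\<exists>N. \<forall>i\<ge>N. S (r i) \<subseteq> U" by blast
qed

lemma conv_subseq:
  assumes "convergence_sequence_on Y F n p" "strict_mono r"
  shows "convergence_sequence_on Y (\<lambda>i. F (r i)) n p"
proof -
  have "\<And>C. compact C \<and> C \<subseteq> Y - {n} \<Longrightarrow> sets_converge_to (\<lambda>i. F (r i) ` C) p"
  proof -
    fix C assume "compact C \<and> C \<subseteq> Y - {n}"
    then have "sets_converge_to (\<lambda>i. F i ` C) p" using assms(1) unfolding convergence_sequence_on_def by blast
    from sets_conv_subseq[OF this assms(2)] show "sets_converge_to (\<lambda>i. F (r i) ` C) p" by simp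
  qed
  then show ?thesis using assms(1) unfolding convergence_sequence_on_def by blast
qed

lemma three_points:
  assumes "infinite D \<or> 2 < card D"
  obtains a b c where "a \<in> D" "b \<in> D" "c \<in> D" "a \<noteq> b" "a \<noteq> c" "b \<noteq> c"
proof -
  have "\<exists>T. T \<subseteq> D \<and> card T = 3"
  proof (cases "finite D")
    case True
    then have "3 \<le> card D" using assms by simp
    then show ?thesis using obtain_subset_with_card_n[of 3 D] by metis
  next
    case False
    then show ?thesis using infinite_arbitrarily_large[of D 3] by blast
  qed
  then obtain T where T: "T \<subseteq> D" "card T = 3" by blast
  then obtain x y z where "T = {x,y,z}" "x \<noteq> y" "y \<noteq> z" "x \<noteq> z" using card_3_iff[of T] by blast
  then show ?thesis using that T by auto
qed

lemma homeo_sep: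
  assumes "homeomorphism X X F G" "C \<subseteq> X" "u \<in> X - C" "v \<in> X - C"
    "\<not> connected_component (X - C) u v"
  shows "F u \<in> X - F ` C" "F v \<in> X - F ` C" "\<not> connected_component (X - F ` C) (F u) (F v)"
proof -
  have h: "F ` X = X" "G ` X = X" "continuous_on X G" "\<forall>x\<in>X. G (F x) = x" "\<forall>y\<in>X. F (G y) = y"
    using assms(1) unfolding homeomorphism_def by auto
  have FX: "\<And>x. x \<in> X \<Longrightarrow> F x \<in> X" using h(1) by blast
  have GX: "\<And>x. x \<in> X \<Longrightarrow> G x \<in> X" using h(2) by blast
  have injF: "\<And>x y. x \<in> X \<Longrightarrow> y \<in> X \<Longrightarrow> F x = F y \<Longrightarrow> x = y" using h(4) by metis
  have notin: "\<And>w. w \<in> X - C \<Longrightarrow> F w \<in> X - F ` C"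
  proof -
    fix w assume w: "w \<in> X - C"
    have "F w \<notin> F ` C"
    proof
      assume "F w \<in> F ` C"
      then obtain c where "c \<in> C" "F w = F c" by blast
      then show False using injF[of w c] w assms(2) by blast
    qed
    then show "F w \<in> X - F ` C" using FX w by blast
  qed
  show "F u \<in> X - F ` C" "F v \<in> X - F ` C" using notin assms(3,4) by auto
  show "\<not> connected_component (X - F ` C) (F u) (F v)"
  proof
    assume "connected_component (X - F ` C) (F u) (F v)"
    then obtain T where T: "connected T" "T \<subseteq> X - F ` C" "F u \<in> T" "F v \<in> T"
      unfolding connected_component_def by blast
    have "T \<subseteq> X" using T(2) by blast
    then have "continuous_on T G" using h(3) continuous_on_subset by blast
    then have c: "connected (G ` T)" using T(1) connected_continuous_image by blast
    have s: "G ` T \<subseteq> X - C"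
    proof
      fix y assume "y \<in> G ` T"
      then obtain t where t: "t \<in> T" "y = G t" by blast
      have tX: "t \<in> X" using T t by blast
      have "G t \<notin> C"
      proof
        assume "G t \<in> C"
        then have "F (G t) \<in> F ` C" by blast
        then show False using h(5) tX t T(2) by auto
      qed
      then show "y \<in> X - C" using GX tX t by blast
    qed
    have "u \<in> G ` T" using T(3) h(4) assms(3) by (metis DiffD1 image_eqI)
    moreover have "v \<in> G ` T" using T(4) h(4) assms(4) by (metis DiffD1 image_eqI)
    ultimately show False using assms(5) c s unfolding connected_component_def by blast
  qed
qed

lemma pp_core:
  fixes X :: "'a::metric_space set"
  assumes "connected W" "W = X \<inter> Op" "open Op" "p \<in> Op"
    and ev: "eventually (\<lambda>i. W \<inter> S i = {}) sequentially"
    and "u \<longlonglongrightarrow> p" "v \<longlonglongrightarrow> p" "\<forall>i. u i \<in> X" "\<forall>i. v i \<in> X"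
    and sep: "\<forall>i. \<not> connected_component (X - S i) (u i) (v i)"
  shows False
proof -
  have "eventually (\<lambda>i. u i \<in> Op) sequentially" using assms(6) assms(3,4) topological_tendstoD by blast
  moreover have "eventually (\<lambda>i. v i \<in> Op) sequentially" using assms(7) assms(3,4) topological_tendstoD by blast
  ultimately have "eventually (\<lambda>i. u i \<in> Op \<and> v i \<in> Op \<and> W \<inter> S i = {}) sequentially"
    using ev by (simp add: eventually_conj)
  then obtain N where N: "u N \<in> Op" "v N \<in> Op" "W \<inter> S N = {}"
    unfolding eventually_sequentially by blast
  have "u N \<in> W" "v N \<in> W" using N assms(2,8,9) by auto
  moreover have "W \<subseteq> X - S N" using N assms(2) by blast
  ultimately have "connected_component (X - S N) (u N) (v N)"
    unfolding connected_component_def using assms(1) by blast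
  then show False using sep by blast
qed

lemma pp_shrink:
  fixes X :: "'a::metric_space set"
  assumes lc: "locally connected X" and pX: "p \<in> X"
    and sc: "sets_converge_to S q" and "u \<longlonglongrightarrow> p" "v \<longlonglongrightarrow> p" "\<forall>i. u i \<in> X" "\<forall>i. v i \<in> X"
    and sep: "\<forall>i. \<not> connected_component (X - S i) (u i) (v i)"
  shows "q = p"
proof (rule ccontr)
  assume qp: "q \<noteq> p"
  define r where "r = dist p q / 2"
  have r: "r > 0" using qp unfolding r_def by simp
  have "openin (top_of_set X) (X \<inter> ball p r)" by (simp add: openin_open_Int)
  then obtain W where W: "openin (top_of_set X) W" "connected W" "p \<in> W" "W \<subseteq> X \<inter> ball p r"
    using lc pX r unfolding locally_connected by (metis IntI centre_in_ball)
  then obtain Op where Op: "open Op" "W = X \<inter> Op" using openin_open by metis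
  have "\<exists>N. \<forall>i\<ge>N. S i \<subseteq> ball q r" using sc r unfolding sets_converge_to_def by simp
  then have ev: "eventually (\<lambda>i. S i \<subseteq> ball q r) sequentially" unfolding eventually_sequentially .
  have disj: "ball p r \<inter> ball q r = {}"
  proof (rule ccontr)
    assume "ball p r \<inter> ball q r \<noteq> {}"
    then obtain z where "dist p z < r" "dist q z < r" by auto
    then have "dist p q < 2 * r" using dist_triangle3[of p q z] dist_commute[of z p] dist_commute[of z q] by linarith
    then show False using r_def by simp
  qed
  have "eventually (\<lambda>i. W \<inter> S i = {}) sequentially"
    using ev by (rule eventually_mono) (use W disj in blast)
  then show False using pp_core[OF W(2) Op(2) Op(1) _ _ assms(4,5,6,7) sep] W(3) Op(2) by blast
qed

lemma pp_const:
  fixes X :: "'a::metric_space set"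
  assumes lc: "locally connected X" and pX: "p \<in> X" and "closed E" "p \<notin> E"
    and "u \<longlonglongrightarrow> p" "v \<longlonglongrightarrow> p" "\<forall>i. u i \<in> X" "\<forall>i. v i \<in> X"
    and sep: "\<forall>i. \<not> connected_component (X - E) (u i) (v i)"
  shows False
proof -
  have "openin (top_of_set X) (X \<inter> (- E))" using assms(3) by (simp add: openin_open_Int open_Compl)
  then obtain W where W: "openin (top_of_set X) W" "connected W" "p \<in> W" "W \<subseteq> X \<inter> (- E)"
    using lc pX assms(4) unfolding locally_connected by (metis IntI ComplI)
  then obtain Op where Op: "open Op" "W = X \<inter> Op" using openin_open by metis
  have "eventually (\<lambda>i. W \<inter> (\<lambda>i. E) i = {}) sequentially" using W(4) by auto
  then show False using pp_core[OF W(2) Op(2) Op(1) _ _ assms(5,6,7,8), of "\<lambda>i. E"] sep W(3) Op(2) by blast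
qed

lemma lemma_S:
  fixes X :: "'a::metric_space set"
  assumes lc: "locally connected X"
    and hom: "\<forall>i. homeomorphism X X (F i) (Finv i)"
    and DX: "D \<subseteq> X" and cD: "compact D" and inv: "\<forall>i. F i ` D = D"
    and conv: "convergence_sequence_on D F n p"
    and a: "a1 \<in> D" "a2 \<in> D" "a3 \<in> D" "a1 \<noteq> a2" "a1 \<noteq> a3" "a2 \<noteq> a3"
    and cC: "closed C" and CX: "C \<subseteq> X" and nC: "n \<notin> C" and cr: "cross X C D"
  shows "(\<exists>x\<in>C\<inter>D. x \<noteq> n) \<or>
         (\<exists>u v. u \<in> D - C \<and> v \<in> D - C \<and> u \<noteq> n \<and> v \<noteq> n \<and> \<not> connected_component (X - C) u v)"
proof (cases "C \<inter> D = {}")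
  case False
  then obtain x where x: "x \<in> C \<inter> D" by blast
  then have "x \<noteq> n" using nC by blast
  then show ?thesis using x by (intro disjI1) blast
next
  case True
  then have "separates X C D" using cr unfolding cross_def by blast
  then obtain u v where uv: "u \<in> D" "v \<in> D" "u \<in> X - C" "v \<in> X - C"
      "\<not> connected_component (X - C) u v"
    unfolding separates_def separates_from_def by blast
  show ?thesis
  proof (cases "u \<noteq> n \<and> v \<noteq> n")
    case True
    then show ?thesis using uv by blast
  next
    case False
    have nXC: "n \<in> X - C" using False uv by blast
    obtain w where w: "w \<in> D - C" "w \<noteq> n" "\<not> connected_component (X - C) n w"
    proof (cases "u = n")
      case True
      then have "v \<noteq> n" using uv(5) connected_component_refl[OF nXC] by blast
      then show ?thesis using that[of v] uv True by blast
    next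
      case f2: False
      then have "v = n" using False by blast
      then show ?thesis using that[of u] uv f2 connected_component_sym by blast
    qed
    define U where "U = connected_component_set (X - C) n"
    have "openin (top_of_set X) (X - C)"
    proof -
      have "X - C = X \<inter> (- C)" by blast
      then show ?thesis using cC by (simp add: openin_open_Int open_Compl)
    qed
    then have lc': "locally connected (X - C)" using locally_open_subset lc by blast
    have "openin (top_of_set (X - C)) U"
      unfolding U_def by (rule openin_connected_component_locally_connected[OF lc'])
    then have oU: "openin (top_of_set X) U" using \<open>openin (top_of_set X) (X - C)\<close> openin_trans by blast
    have nU: "n \<in> U" unfolding U_def using connected_component_refl[OF nXC] by simp
    show ?thesis
    proof (cases "\<exists>e\<in>D \<inter> U. e \<noteq> n")
      case True
      then obtain e where e: "e \<in> D" "e \<in> U" "e \<noteq> n" by blast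
      have ce: "connected_component (X - C) n e" using e(2) unfolding U_def by simp
      have "e \<in> X - C" using connected_component_in[OF ce] by blast
      moreover have "\<not> connected_component (X - C) e w"
        using ce w(3) connected_component_trans by blast
      ultimately show ?thesis using e w by blast
    next
      case False
      then have DU: "D \<inter> U \<subseteq> {n}" by blast
      obtain Op where Op: "open Op" "U = X \<inter> Op" using oU openin_open by metis
      define K where "K = D \<inter> (- Op)"
      have cK: "compact K" unfolding K_def using cD Op(1) by (simp add: compact_Int_closed closed_Compl)
      have "n \<in> Op" using nU Op by blast
      then have "K \<subseteq> D - {n}" unfolding K_def by blast
      then have scK: "sets_converge_to (\<lambda>i. F i ` K) p" using conv cK unfolding convergence_sequence_on_def by blast
      have cover: "\<And>i d. d \<in> D \<Longrightarrow> d \<noteq> F i n \<Longrightarrow> d \<in> F i ` K"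
      proof -
        fix i d assume d: "d \<in> D" "d \<noteq> F i n"
        then obtain d' where d': "d' \<in> D" "d = F i d'" using inv by (metis imageE)
        have "d' \<noteq> n" using d d' by blast
        have "d' \<notin> Op"
        proof
          assume "d' \<in> Op"
          then have "d' \<in> D \<inter> U" using d' DX Op by blast
          then show False using DU \<open>d' \<noteq> n\<close> by blast
        qed
        then show "d \<in> F i ` K" unfolding K_def using d' by blast
      qed
      define \<epsilon> where "\<epsilon> = min (dist a1 a2) (min (dist a1 a3) (dist a2 a3)) / 2"
      have \<epsilon>: "\<epsilon> > 0" unfolding \<epsilon>_def using a by simp
      obtain N where N: "\<forall>i\<ge>N. F i ` K \<subseteq> ball p \<epsilon>"
        using scK \<epsilon> unfolding sets_converge_to_def by (meson open_ball centre_in_ball)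
      have close: "\<And>x y. x \<in> D \<Longrightarrow> y \<in> D \<Longrightarrow> x \<noteq> F N n \<Longrightarrow> y \<noteq> F N n \<Longrightarrow> dist x y < 2 * \<epsilon>"
      proof -
        fix x y assume xy: "x \<in> D" "y \<in> D" "x \<noteq> F N n" "y \<noteq> F N n"
        then have "x \<in> ball p \<epsilon>" "y \<in> ball p \<epsilon>" using cover N by blast+
        then have "dist p x < \<epsilon>" "dist p y < \<epsilon>" by auto
        then show "dist x y < 2 * \<epsilon>" using dist_triangle3[of x y p] dist_commute[of p x] dist_commute[of p y]
          by linarith
      qed
      have "2 * \<epsilon> \<le> dist a1 a2" "2 * \<epsilon> \<le> dist a1 a3" "2 * \<epsilon> \<le> dist a2 a3" unfolding \<epsilon>_def by auto
      then show ?thesis using close[of a1 a2] close[of a1 a3] close[of a2 a3] a by fastforce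
    qed
  qed
qed

lemma point_conv:
  assumes "convergence_sequence_on D F n p" "x \<in> D" "x \<noteq> n"
  shows "(\<lambda>i. F i x) \<longlonglongrightarrow> p"
proof -
  have "compact {x} \<and> {x} \<subseteq> D - {n}" using assms by simp
  then have "sets_converge_to (\<lambda>i. F i ` {x}) p" using assms(1) unfolding convergence_sequence_on_def by blast
  then show ?thesis using sets_conv_points[of "\<lambda>i. F i ` {x}" p "\<lambda>i. F i x"] by simp
qed

lemma homeo_X:
  assumes "homeomorphism X X F G" "x \<in> X"
  shows "F x \<in> X"
  using assms unfolding homeomorphism_def by blast

lemma homeo_inj:
  assumes "homeomorphism X X F G"
  shows "inj_on F X"
  using assms unfolding homeomorphism_def by (metis inj_on_inverseI)

lemma limit_in_closed:
  assumes "closed S" "\<forall>i. x i \<in> S" "x \<longlonglongrightarrow> l"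
  shows "l \<in> S"
  using assms closed_sequentially by blast

lemma S_shrink:
  fixes X :: "'a::metric_space set"
  assumes lc: "locally connected X"
    and hom: "\<forall>i. homeomorphism X X (F i) (Finv i)"
    and DX: "D \<subseteq> X" and cD: "compact D" and inv: "\<forall>i. F i ` D = D"
    and conv: "convergence_sequence_on D F n p"
    and a: "a1 \<in> D" "a2 \<in> D" "a3 \<in> D" "a1 \<noteq> a2" "a1 \<noteq> a3" "a2 \<noteq> a3"
    and cC: "closed C" and CX: "C \<subseteq> X" and nC: "n \<notin> C" and cr: "cross X C D"
    and sh: "sets_converge_to (\<lambda>i. F i ` C) q"
  shows "q = p"
proof -
  have pX: "p \<in> X" using conv DX unfolding convergence_sequence_on_def by blast
  from lemma_S[OF lc hom DX cD inv conv a cC CX nC cr] show ?thesis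
  proof
    assume "\<exists>x\<in>C\<inter>D. x \<noteq> n"
    then obtain x where x: "x \<in> C" "x \<in> D" "x \<noteq> n" by blast
    have "(\<lambda>i. F i x) \<longlonglongrightarrow> p" using point_conv[OF conv x(2,3)] .
    moreover have "(\<lambda>i. F i x) \<longlonglongrightarrow> q" using sets_conv_points[OF sh, of "\<lambda>i. F i x"] x by blast
    ultimately show ?thesis using LIMSEQ_unique by blast
  next
    assume "\<exists>u v. u \<in> D - C \<and> v \<in> D - C \<and> u \<noteq> n \<and> v \<noteq> n \<and> \<not> connected_component (X - C) u v"
    then obtain u v where uv: "u \<in> D - C" "v \<in> D - C" "u \<noteq> n" "v \<noteq> n" "\<not> connected_component (X - C) u v" by blast
    have sep: "\<forall>i. \<not> connected_component (X - F i ` C) (F i u) (F i v)"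
      using homeo_sep(3)[OF _ CX _ _ uv(5)] hom uv DX by blast
    have inX: "\<forall>i. F i u \<in> X" "\<forall>i. F i v \<in> X" using homeo_X hom uv DX by blast+
    show ?thesis
      using pp_shrink[OF lc pX sh point_conv[OF conv _ uv(3)] point_conv[OF conv _ uv(4)] inX sep] uv by blast
  qed
qed

lemma S_const:
  fixes X :: "'a::metric_space set"
  assumes lc: "locally connected X"
    and hom: "\<forall>i. homeomorphism X X (F i) (Finv i)"
    and DX: "D \<subseteq> X" and cD: "compact D" and inv: "\<forall>i. F i ` D = D"
    and conv: "convergence_sequence_on D F n p"
    and a: "a1 \<in> D" "a2 \<in> D" "a3 \<in> D" "a1 \<noteq> a2" "a1 \<noteq> a3" "a2 \<noteq> a3"
    and cC: "closed C" and CX: "C \<subseteq> X" and nC: "n \<notin> C" and cr: "cross X C D"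
    and cst: "\<forall>i. F i ` C = E" and cE: "closed E"
  shows "p \<in> E"
proof -
  have pX: "p \<in> X" using conv DX unfolding convergence_sequence_on_def by blast
  from lemma_S[OF lc hom DX cD inv conv a cC CX nC cr] show ?thesis
  proof
    assume "\<exists>x\<in>C\<inter>D. x \<noteq> n"
    then obtain x where x: "x \<in> C" "x \<in> D" "x \<noteq> n" by blast
    have "(\<lambda>i. F i x) \<longlonglongrightarrow> p" using point_conv[OF conv x(2,3)] .
    moreover have "\<forall>i. F i x \<in> E" using cst x by blast
    ultimately show ?thesis using limit_in_closed[OF cE, of "\<lambda>i. F i x"] by blast
  next
    assume "\<exists>u v. u \<in> D - C \<and> v \<in> D - C \<and> u \<noteq> n \<and> v \<noteq> n \<and> \<not> connected_component (X - C) u v"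
    then obtain u v where uv: "u \<in> D - C" "v \<in> D - C" "u \<noteq> n" "v \<noteq> n" "\<not> connected_component (X - C) u v" by blast
    have sep0: "\<forall>i. \<not> connected_component (X - F i ` C) (F i u) (F i v)"
      using homeo_sep(3)[OF _ CX _ _ uv(5)] hom uv DX by blast
    have sep: "\<forall>i. \<not> connected_component (X - E) (F i u) (F i v)"
      using sep0 cst by simp
    have inX: "\<forall>i. F i u \<in> X" "\<forall>i. F i v \<in> X" using homeo_X hom uv DX by blast+
    show ?thesis
      proof (rule ccontr)
      assume "p \<notin> E"
      have "u \<in> D" "v \<in> D" using uv by auto
      then show False using pp_const[OF lc pX cE \<open>p \<notin> E\<close> point_conv[OF conv _ uv(3)] point_conv[OF conv _ uv(4)] inX sep] by blast
    qed
  qed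
qed

lemma cross_sym: "cross X A B = cross X B A"
  unfolding cross_def by blast

lemma G2:
  fixes X :: "'a::metric_space set"
  assumes lc: "locally connected X" and cX: "closed X"
    and hom: "\<forall>i. homeomorphism X X (F i) (Finv i)"
    and CX: "C \<subseteq> X" "C' \<subseteq> X" and cr: "cross X C C'"
    and sh: "sets_converge_to (\<lambda>i. F i ` C) q" and sh': "sets_converge_to (\<lambda>i. F i ` C') q'"
  shows "q = q'"
proof (cases "C \<inter> C' = {}")
  case False
  then obtain x where x: "x \<in> C" "x \<in> C'" by blast
  have "(\<lambda>i. F i x) \<longlonglongrightarrow> q" using sets_conv_points[OF sh, of "\<lambda>i. F i x"] x by blast
  moreover have "(\<lambda>i. F i x) \<longlonglongrightarrow> q'" using sets_conv_points[OF sh', of "\<lambda>i. F i x"] x by blast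
  ultimately show ?thesis using LIMSEQ_unique by blast
next
  case True
  then have "separates X C' C" using cr unfolding cross_def by blast
  then obtain u v where uv: "u \<in> C" "v \<in> C" "u \<in> X - C'" "v \<in> X - C'"
      "\<not> connected_component (X - C') u v"
    unfolding separates_def separates_from_def by blast
  have sep: "\<forall>i. \<not> connected_component (X - F i ` C') (F i u) (F i v)"
    using homeo_sep(3)[OF _ CX(2) uv(3,4,5)] hom by blast
  have inX: "\<forall>i. F i u \<in> X" "\<forall>i. F i v \<in> X" using homeo_X hom uv by blast+
  have cu: "(\<lambda>i. F i u) \<longlonglongrightarrow> q" using sets_conv_points[OF sh, of "\<lambda>i. F i u"] uv by blast
  have cv: "(\<lambda>i. F i v) \<longlonglongrightarrow> q" using sets_conv_points[OF sh, of "\<lambda>i. F i v"] uv by blast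
  have qX: "q \<in> X" using limit_in_closed[OF cX inX(1) cu] .
  show ?thesis using pp_shrink[OF lc qX sh' cu cv inX sep] by simp
qed

lemma G3:
  fixes X :: "'a::metric_space set"
  assumes lc: "locally connected X" and cX: "closed X"
    and hom: "\<forall>i. homeomorphism X X (F i) (Finv i)"
    and CX: "C \<subseteq> X" "C' \<subseteq> X" and cr: "cross X C C'"
    and sh: "sets_converge_to (\<lambda>i. F i ` C) q" and cst: "\<forall>i. F i ` C' = E" and cE: "closed E"
  shows "q \<in> E"
proof (cases "C \<inter> C' = {}")
  case False
  then obtain x where x: "x \<in> C" "x \<in> C'" by blast
  have "(\<lambda>i. F i x) \<longlonglongrightarrow> q" using sets_conv_points[OF sh, of "\<lambda>i. F i x"] x by blast
  moreover have "\<forall>i. F i x \<in> E" using cst x by blast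
  ultimately show ?thesis using limit_in_closed[OF cE, of "\<lambda>i. F i x"] by blast
next
  case True
  then have "separates X C' C" using cr unfolding cross_def by blast
  then obtain u v where uv: "u \<in> C" "v \<in> C" "u \<in> X - C'" "v \<in> X - C'"
      "\<not> connected_component (X - C') u v"
    unfolding separates_def separates_from_def by blast
  have sep0: "\<forall>i. \<not> connected_component (X - F i ` C') (F i u) (F i v)"
    using homeo_sep(3)[OF _ CX(2) uv(3,4,5)] hom by blast
  have sep: "\<forall>i. \<not> connected_component (X - E) (F i u) (F i v)"
    using sep0 cst by simp
  have inX: "\<forall>i. F i u \<in> X" "\<forall>i. F i v \<in> X" using homeo_X hom uv by blast+
  have cu: "(\<lambda>i. F i u) \<longlonglongrightarrow> q" using sets_conv_points[OF sh, of "\<lambda>i. F i u"] uv by blast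
  have cv: "(\<lambda>i. F i v) \<longlonglongrightarrow> q" using sets_conv_points[OF sh, of "\<lambda>i. F i v"] uv by blast
  have qX: "q \<in> X" using limit_in_closed[OF cX inX(1) cu] .
  show ?thesis using pp_const[OF lc qX cE _ cu cv inX sep] by blast
qed

lemma K_lemma:
  fixes X :: "'a::metric_space set"
  assumes hom: "\<forall>i. homeomorphism X X (F i) (Finv i)"
    and BX: "B \<subseteq> X" and cB: "compact B" and inv: "\<forall>i. F i ` B = B"
    and conv: "convergence_sequence_on B F n' p'"
    and CX: "C \<subseteq> X" and cC: "closed C" and nC: "n' \<notin> C"
    and cst: "\<forall>i. F i ` C = E" and pE: "p' \<in> E"
  shows "\<exists>y\<in>C \<inter> B. \<forall>i. F i y = p'"
proof -
  have img: "\<And>i. F i ` (C \<inter> B) = E \<inter> B"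
  proof -
    fix i
    have "inj_on (F i) X" using homeo_inj hom by blast
    then have "F i ` (C \<inter> B) = F i ` C \<inter> F i ` B" using inj_on_image_Int CX BX by blast
    then show "F i ` (C \<inter> B) = E \<inter> B" using cst inv by simp
  qed
  have "compact (B \<inter> C)" using cB cC by (rule compact_Int_closed)
  then have "compact (C \<inter> B) \<and> C \<inter> B \<subseteq> B - {n'}" using nC by (simp add: Int_commute) blast
  then have sc: "sets_converge_to (\<lambda>i. F i ` (C \<inter> B)) p'" using conv unfolding convergence_sequence_on_def by blast
  have W: "E \<inter> B \<subseteq> {p'}"
  proof
    fix w assume "w \<in> E \<inter> B"
    then have "\<And>i. w \<in> F i ` (C \<inter> B)" using img by blast
    then show "w \<in> {p'}" using sets_conv_const_point[OF sc] by blast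
  qed
  have "p' \<in> B" using conv unfolding convergence_sequence_on_def by blast
  then have "p' \<in> F 0 ` (C \<inter> B)" using img pE by blast
  then obtain y where y: "y \<in> C \<inter> B" "F 0 y = p'" by blast
  have "\<forall>i. F i y = p'"
  proof
    fix i
    have "F i y \<in> E \<inter> B" using img[of i] y by blast
    then show "F i y = p'" using W by blast
  qed
  then show ?thesis using y by blast
qed

definition cs :: "(nat \<Rightarrow> 'a::topological_space \<Rightarrow> 'a) \<Rightarrow> 'a set \<Rightarrow> bool" where
  "cs F C \<longleftrightarrow> (\<exists>E. \<forall>i. F i ` C = E) \<or> (\<exists>q. sets_converge_to (\<lambda>i. F i ` C) q)"

lemma cs_subseq:
  assumes "cs F C" "strict_mono r"
  shows "cs (\<lambda>i. F (r i)) C"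
proof -
  from assms(1) consider (c) E where "\<forall>i. F i ` C = E" | (s) q where "sets_converge_to (\<lambda>i. F i ` C) q"
    unfolding cs_def by blast
  then show ?thesis
  proof cases
    case c
    then show ?thesis unfolding cs_def by blast
  next
    case s
    from sets_conv_subseq[OF s assms(2)] show ?thesis unfolding cs_def by blast
  qed
qed

lemma dichotomy:
  fixes X :: "'a::metric_space set" and F :: "nat \<Rightarrow> 'a \<Rightarrow> 'a"
  assumes cX: "compact X" and AX: "\<forall>A\<in>\<A>. closed A \<and> A \<subseteq> X"
    and fin: "\<forall>\<epsilon>>0. finite {A\<in>\<A>. diameter A > \<epsilon>}"
    and img: "\<forall>i. F i ` C \<in> \<A>"
  shows "\<exists>r. strict_mono r \<and> cs (\<lambda>i. F (r i)) C"
proof (cases "\<exists>E. infinite {i. F i ` C = E}")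
  case True
  then obtain E where "infinite {i. F i ` C = E}" by blast
  then obtain r :: "nat \<Rightarrow> nat" where "strict_mono r" "\<And>i. F (r i) ` C = E" using inf_subseq by blast
  then show ?thesis unfolding cs_def by blast
next
  case False
  note finE = False
  show ?thesis
  proof (cases "C = {}")
    case True
    then have "cs F C" unfolding cs_def by simp
    then show ?thesis using strict_mono_id cs_subseq by fastforce
  next
    case False
    then obtain c0 where c0: "c0 \<in> C" by blast
    define T where "T i = F i ` C" for i
    have TA: "\<And>i. T i \<in> \<A>" using img T_def by simp
    have TX: "\<And>i. T i \<subseteq> X" using TA AX by blast
    have Tb: "\<And>i. bounded (T i)" using TX cX compact_imp_bounded bounded_subset by blast
    have diam: "\<And>\<epsilon>. \<epsilon> > 0 \<Longrightarrow> \<exists>N. \<forall>i\<ge>N. diameter (T i) \<le> \<epsilon>"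
    proof -
      fix \<epsilon> :: real assume "\<epsilon> > 0"
      then have f1: "finite {A\<in>\<A>. diameter A > \<epsilon>}" using fin by blast
      have "{i. diameter (T i) > \<epsilon>} \<subseteq> (\<Union>E\<in>{A\<in>\<A>. diameter A > \<epsilon>}. {i. F i ` C = E})"
        unfolding T_def using TA T_def by (auto simp del: )
      moreover have "finite (\<Union>E\<in>{A\<in>\<A>. diameter A > \<epsilon>}. {i. F i ` C = E})"
        using f1 finE by (intro finite_UN_I) auto
      ultimately have "finite {i. diameter (T i) > \<epsilon>}" using finite_subset by blast
      then obtain k where "{i. diameter (T i) > \<epsilon>} \<subseteq> {..<k}" using finite_nat_bounded by blast
      then have "\<forall>i\<ge>k. diameter (T i) \<le> \<epsilon>"
        by (metis (mono_tags, lifting) lessThan_iff linorder_not_le mem_Collect_eq subset_eq)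
      then show "\<exists>N. \<forall>i\<ge>N. diameter (T i) \<le> \<epsilon>" by blast
    qed
    define x where "x i = F i c0" for i
    have xT: "\<And>i. x i \<in> T i" using c0 x_def T_def by simp
    have "\<forall>i. x i \<in> X" using xT TX by blast
    then obtain l r where lr: "l \<in> X" "strict_mono (r :: nat \<Rightarrow> nat)" "(x \<circ> r) \<longlonglongrightarrow> l"
      using seq_compactE[OF compact_imp_seq_compact[OF cX]] by metis
    have "sets_converge_to (\<lambda>i. T (r i)) l"
      unfolding sets_converge_to_def
    proof (intro allI impI)
      fix U assume U: "open U \<and> l \<in> U"
      then obtain e where e: "e > 0" "ball l e \<subseteq> U" using open_contains_ball by blast
      obtain N1 where N1: "\<forall>i\<ge>N1. dist ((x \<circ> r) i) l < e / 2"
        using lr(3) e(1) unfolding lim_sequentially by (meson half_gt_zero)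
      obtain N2 where N2: "\<forall>i\<ge>N2. diameter (T i) \<le> e / 4" using diam e(1) by (meson divide_pos_pos zero_less_numeral)
      have "\<forall>i\<ge>max N1 N2. T (r i) \<subseteq> U"
      proof (intro allI impI subsetI)
        fix i z assume i: "max N1 N2 \<le> i" and z: "z \<in> T (r i)"
        have "r i \<ge> i" using seq_suble[OF lr(2)] by blast
        then have d: "diameter (T (r i)) \<le> e / 4" using N2 i by simp
        have "dist z (x (r i)) \<le> diameter (T (r i))" using diameter_bounded_bound[OF Tb z xT] .
        moreover have "dist (x (r i)) l < e / 2" using N1 i by simp
        ultimately have "dist z l < e" using dist_triangle[of z l "x (r i)"] d e(1) by linarith
        then show "z \<in> U" using e(2) by (simp add: dist_commute subset_iff)
      qed
      then show "\<exists>N. \<forall>i\<ge>N. T (r i) \<subseteq> U" by blast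
    qed
    then have "cs (\<lambda>i. F (r i)) C" unfolding cs_def T_def by blast
    then show ?thesis using lr(2) by blast
  qed
qed

lemma multi_dichotomy:
  fixes X :: "'a::metric_space set" and F :: "nat \<Rightarrow> 'a \<Rightarrow> 'a"
  assumes cX: "compact X" and AX: "\<forall>A\<in>\<A>. closed A \<and> A \<subseteq> X"
    and fin: "\<forall>\<epsilon>>0. finite {A\<in>\<A>. diameter A > \<epsilon>}"
    and img: "\<forall>i. \<forall>C\<in>\<A>. F i ` C \<in> \<A>"
    and L: "set L \<subseteq> \<A>"
  shows "\<exists>r. strict_mono r \<and> (\<forall>C\<in>set L. cs (\<lambda>i. F (r i)) C)"
  using L
proof (induction L)
  case Nil
  then show ?case using strict_mono_id by (metis empty_iff list.set(1))
next
  case (Cons C L)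
  then obtain r where r: "strict_mono r" "\<forall>C\<in>set L. cs (\<lambda>i. F (r i)) C" by auto
  have "\<forall>i. F (r i) ` C \<in> \<A>" using img Cons.prems by simp
  then obtain r2 where r2: "strict_mono r2" "cs (\<lambda>i. F (r (r2 i))) C"
    using dichotomy[OF cX AX fin, of "\<lambda>i. F (r i)" C] by blast
  have "strict_mono (r \<circ> r2)" using r(1) r2(1) by (rule strict_mono_o)
  moreover have "\<forall>C'\<in>set (C # L). cs (\<lambda>i. F ((r \<circ> r2) i)) C'"
    using r2(2) cs_subseq[OF _ r2(1)] r(2) by auto
  ultimately show ?case by blast
qed

lemma infinite_range_strict_mono:
  assumes "strict_mono (r :: nat \<Rightarrow> nat)"
  shows "infinite (range r)"
  using assms strict_mono_imp_inj_on finite_imageD infinite_UNIV_nat by blast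

lemma GCL:
  fixes X :: "'a::metric_space set" and F Finv :: "nat \<Rightarrow> 'a \<Rightarrow> 'a"
  assumes cX: "compact X" and lc: "locally connected X"
    and AX: "\<forall>A\<in>\<A>. closed A \<and> A \<subseteq> X"
    and fin: "\<forall>\<epsilon>>0. finite {A\<in>\<A>. diameter A > \<epsilon>}"
    and card3: "\<forall>A\<in>\<A>. infinite A \<or> 2 < card A"
    and hom: "\<forall>i. homeomorphism X X (F i) (Finv i)"
    and img: "\<forall>i. \<forall>C\<in>\<A>. F i ` C \<in> \<A>"
    and AA: "A \<in> \<A>" and BA: "B \<in> \<A>" and invA: "\<forall>i. F i ` A = A" and invB: "\<forall>i. F i ` B = B"
    and convA: "convergence_sequence_on A F n p" and convB: "convergence_sequence_on B F n' p'"
    and Lne: "L \<noteq> []" and LA: "set L \<subseteq> \<A>" and crs: "crossing_sequence X (A # L @ [B])"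
    and avoid: "\<forall>C\<in>set L. n \<notin> C \<and> n' \<notin> C"
    and HK: "\<forall>y\<in>B. y \<in> \<Union>(set L) \<longrightarrow> finite {i. F i y = p'}"
  shows "p = p'"
proof -
  obtain r where r: "strict_mono r" "\<forall>C\<in>set L. cs (\<lambda>i. F (r i)) C"
    using multi_dichotomy[OF cX AX fin img LA] by blast
  define G where "G = (\<lambda>i. F (r i))"
  define Ginv where "Ginv = (\<lambda>i. Finv (r i))"
  have csG: "\<forall>C\<in>set L. cs G C" using r(2) G_def by simp
  have homG: "\<forall>i. homeomorphism X X (G i) (Ginv i)" using hom G_def Ginv_def by simp
  have invAG: "\<forall>i. G i ` A = A" and invBG: "\<forall>i. G i ` B = B" using invA invB G_def by simp_all
  have convAG: "convergence_sequence_on A G n p" using conv_subseq[OF convA r(1)] G_def by simp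
  have convBG: "convergence_sequence_on B G n' p'" using conv_subseq[OF convB r(1)] G_def by simp
  have cXc: "closed X" using cX compact_imp_closed by blast
  have AXs: "A \<subseteq> X" "B \<subseteq> X" "closed A" "closed B" using AX AA BA by auto
  have cAB: "compact A" "compact B" using AXs cX compact_Int_closed[of X A] compact_Int_closed[of X B]
    by (simp_all add: Int_absorb1)
  obtain a1 a2 a3 where a: "a1 \<in> A" "a2 \<in> A" "a3 \<in> A" "a1 \<noteq> a2" "a1 \<noteq> a3" "a2 \<noteq> a3"
    using three_points card3 AA by metis
  obtain b1 b2 b3 where b: "b1 \<in> B" "b2 \<in> B" "b3 \<in> B" "b1 \<noteq> b2" "b1 \<noteq> b3" "b2 \<noteq> b3"
    using three_points card3 BA by metis
  have noconst: "\<And>C E. C \<in> set L \<Longrightarrow> \<forall>i. G i ` C = E \<Longrightarrow> p' \<in> E \<Longrightarrow> False"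
  proof -
    fix C E assume C: "C \<in> set L" and cst: "\<forall>i. G i ` C = E" and pE: "p' \<in> E"
    have CX: "C \<subseteq> X" "closed C" using C LA AX by auto
    obtain y where y: "y \<in> C \<inter> B" "\<forall>i. G i y = p'"
      using K_lemma[OF homG AXs(2) cAB(2) invBG convBG CX avoid[rule_format, OF C, THEN conjunct2] cst pE] by blast
    have "range r \<subseteq> {i. F i y = p'}" using y(2) G_def by auto
    then have "infinite {i. F i y = p'}" using infinite_range_strict_mono[OF r(1)] finite_subset by blast
    then show False using HK y(1) C by blast
  qed
  have closedE: "\<And>C E. C \<in> set L \<Longrightarrow> \<forall>i. G i ` C = E \<Longrightarrow> closed E"
  proof -
    fix C E assume C: "C \<in> set L" and cst: "\<forall>i. G i ` C = E"
    have "G 0 ` C \<in> \<A>" using img C LA G_def by auto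
    then show "closed E" using cst AX by auto
  qed
  define m where "m = length L"
  have m: "m > 0" using Lne m_def by simp
  have Lj: "\<And>j. j < m \<Longrightarrow> L ! j \<in> set L" using m_def by simp
  have LjX: "\<And>j. j < m \<Longrightarrow> L ! j \<subseteq> X \<and> closed (L ! j)" using Lj LA AX by blast
  have nth1: "\<And>j. j < m \<Longrightarrow> (A # L @ [B]) ! Suc j = L ! j" using m_def by (simp add: nth_append)
  have nthB: "(A # L @ [B]) ! Suc m = B" using m_def by (simp add: nth_append)
  have lenM: "length (A # L @ [B]) = m + 2" using m_def by simp
  have crsM: "\<And>i. Suc i < m + 2 \<Longrightarrow> cross X ((A # L @ [B]) ! i) ((A # L @ [B]) ! Suc i)"
    using crs lenM unfolding crossing_sequence_def by metis
  have crL: "\<And>j. Suc j < m \<Longrightarrow> cross X (L ! j) (L ! Suc j)"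
  proof -
    fix j assume j: "Suc j < m"
    have j0: "j < m" using j by simp
    have "cross X ((A # L @ [B]) ! Suc j) ((A # L @ [B]) ! Suc (Suc j))"
      using crsM[of "Suc j"] j by simp
    then show "cross X (L ! j) (L ! Suc j)" unfolding nth1[OF j0] nth1[OF j] .
  qed
  have crB: "cross X (L ! (m - 1)) B"
  proof -
    have j: "m - 1 < m" using m by simp
    have "cross X ((A # L @ [B]) ! Suc (m - 1)) ((A # L @ [B]) ! Suc (Suc (m - 1)))"
      using crsM[of "Suc (m - 1)"] m by simp
    moreover have "Suc (m - 1) = m" using m by simp
    ultimately show ?thesis using nth1[OF j] nthB by metis
  qed
  have crA: "cross X A (L ! 0)"
  proof -
    have "cross X ((A # L @ [B]) ! 0) ((A # L @ [B]) ! Suc 0)"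
      using crsM[of 0] by simp
    then show ?thesis unfolding nth1[OF m] by simp
  qed
  have base: "sets_converge_to (\<lambda>i. G i ` (L ! (m - 1))) p'"
  proof -
    have j: "m - 1 < m" using m by simp
    have nC: "n' \<notin> L ! (m - 1)" using avoid Lj[OF j] by blast
    from csG Lj[OF j] have "cs G (L ! (m - 1))" by blast
    then consider (c) E where "\<forall>i. G i ` (L ! (m - 1)) = E" | (s) q where "sets_converge_to (\<lambda>i. G i ` (L ! (m - 1))) q"
      unfolding cs_def by blast
    then show ?thesis
    proof cases
      case c
      have "p' \<in> E" using S_const[OF lc homG AXs(2) cAB(2) invBG convBG b LjX[OF j, THEN conjunct2]
          LjX[OF j, THEN conjunct1] nC crB c closedE[OF Lj[OF j] c]] .
      then show ?thesis using noconst[OF Lj[OF j] c] by blast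
    next
      case s
      have "q = p'" using S_shrink[OF lc homG AXs(2) cAB(2) invBG convBG b LjX[OF j, THEN conjunct2]
          LjX[OF j, THEN conjunct1] nC crB s] .
      then show ?thesis using s by simp
    qed
  qed
  have stepL: "\<And>j. Suc j < m \<Longrightarrow> sets_converge_to (\<lambda>i. G i ` (L ! Suc j)) p' \<Longrightarrow>
      sets_converge_to (\<lambda>i. G i ` (L ! j)) p'"
  proof -
    fix j assume j: "Suc j < m" and sh: "sets_converge_to (\<lambda>i. G i ` (L ! Suc j)) p'"
    have j0: "j < m" using j by simp
    from csG Lj[OF j0] have "cs G (L ! j)" by blast
    then consider (c) E where "\<forall>i. G i ` (L ! j) = E" | (s) q where "sets_converge_to (\<lambda>i. G i ` (L ! j)) q"
      unfolding cs_def by blast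
    then show "sets_converge_to (\<lambda>i. G i ` (L ! j)) p'"
    proof cases
      case c
      have cr': "cross X (L ! Suc j) (L ! j)" using crL[OF j] cross_sym by blast
      have "p' \<in> E" using G3[OF lc cXc homG LjX[OF j, THEN conjunct1] LjX[OF j0, THEN conjunct1] cr' sh c
          closedE[OF Lj[OF j0] c]] .
      then show ?thesis using noconst[OF Lj[OF j0] c] by blast
    next
      case s
      have "q = p'" using G2[OF lc cXc homG LjX[OF j0, THEN conjunct1] LjX[OF j, THEN conjunct1] crL[OF j] s sh] .
      then show ?thesis using s by simp
    qed
  qed
  have all: "\<And>j. j \<le> m - 1 \<Longrightarrow> sets_converge_to (\<lambda>i. G i ` (L ! j)) p'"
  proof -
    fix j assume "j \<le> m - 1"
    then show "sets_converge_to (\<lambda>i. G i ` (L ! j)) p'"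
    proof (induction j rule: inc_induct)
      case base
      then show ?case using \<open>sets_converge_to (\<lambda>i. G i ` (L ! (m - 1))) p'\<close> .
    next
      case (step k)
      have "Suc k < m" using step.hyps m by simp
      then show ?case using stepL step.IH by blast
    qed
  qed
  have sh0: "sets_converge_to (\<lambda>i. G i ` (L ! 0)) p'" using all by simp
  have n0: "n \<notin> L ! 0" using avoid Lj[OF m] by blast
  have "p' = p" using S_shrink[OF lc homG AXs(1) cAB(1) invAG convAG a LjX[OF m, THEN conjunct2]
          LjX[OF m, THEN conjunct1] n0 _ sh0] crA cross_sym by blast
  then show ?thesis by simp
qed

lemma conv_inverse:
  fixes X :: "'a::metric_space set"
  assumes hom: "\<forall>i. homeomorphism X X (F i) (Finv i)" and DX: "D \<subseteq> X" and cD: "compact D"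
    and inv: "\<forall>i. F i ` D = D" and conv: "convergence_sequence_on D F n p"
  shows "\<forall>i. Finv i ` D = D" "convergence_sequence_on D Finv p n"
proof -
  have h1: "\<And>i x. x \<in> X \<Longrightarrow> Finv i (F i x) = x" and h2: "\<And>i y. y \<in> X \<Longrightarrow> F i (Finv i y) = y"
    using hom unfolding homeomorphism_def by blast+
  show invD: "\<forall>i. Finv i ` D = D"
  proof
    fix i
    show "Finv i ` D = D"
    proof
      show "Finv i ` D \<subseteq> D"
      proof
        fix z assume "z \<in> Finv i ` D"
        then obtain d where d: "d \<in> D" "z = Finv i d" by blast
        then obtain d' where d': "d' \<in> D" "d = F i d'" using inv by (metis imageE)
        then show "z \<in> D" using d h1 DX by auto
      qed
      show "D \<subseteq> Finv i ` D"
      proof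
        fix d assume d: "d \<in> D"
        then have "F i d \<in> D" using inv by blast
        moreover have "d = Finv i (F i d)" using h1 d DX by auto
        ultimately show "d \<in> Finv i ` D" by blast
      qed
    qed
  qed
  have nD: "n \<in> D" and pD: "p \<in> D" using conv unfolding convergence_sequence_on_def by auto
  have "\<forall>C. compact C \<and> C \<subseteq> D - {p} \<longrightarrow> sets_converge_to (\<lambda>i. Finv i ` C) n"
  proof (intro allI impI)
    fix C assume C: "compact C \<and> C \<subseteq> D - {p}"
    show "sets_converge_to (\<lambda>i. Finv i ` C) n"
      unfolding sets_converge_to_def
    proof (intro allI impI)
      fix U assume U: "open U \<and> n \<in> U"
      define K where "K = D \<inter> (- U)"
      have "compact K" unfolding K_def using cD U by (simp add: compact_Int_closed closed_Compl)
      moreover have "K \<subseteq> D - {n}" unfolding K_def using U by blast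
      ultimately have sK: "sets_converge_to (\<lambda>i. F i ` K) p" using conv unfolding convergence_sequence_on_def by blast
      have "open (- C)" using C compact_imp_closed by blast
      moreover have "p \<in> - C" using C by blast
      ultimately obtain N where N: "\<forall>i\<ge>N. F i ` K \<subseteq> - C" using sK unfolding sets_converge_to_def by blast
      have "\<forall>i\<ge>N. Finv i ` C \<subseteq> U"
      proof (intro allI impI subsetI)
        fix i z assume i: "N \<le> i" and z: "z \<in> Finv i ` C"
        then obtain x where x: "x \<in> C" "z = Finv i x" by blast
        have xD: "x \<in> D" using x C by blast
        then have zD: "z \<in> D" using invD x by blast
        show "z \<in> U"
        proof (rule ccontr)
          assume "z \<notin> U"
          then have "z \<in> K" unfolding K_def using zD by blast
          then have "F i z \<in> - C" using N i by blast
          moreover have "F i z = x" using x h2 xD DX by auto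
          ultimately show False using x by blast
        qed
      qed
      then show "\<exists>N. \<forall>i\<ge>N. Finv i ` C \<subseteq> U" by blast
    qed
  qed
  then show "convergence_sequence_on D Finv p n" using nD pD unfolding convergence_sequence_on_def by blast
qed

lemma common_repeller:
  fixes X :: "'a::metric_space set" and F Finv :: "nat \<Rightarrow> 'a \<Rightarrow> 'a"
  assumes cX: "compact X" and lc: "locally connected X"
    and AX: "\<forall>A\<in>\<A>. closed A \<and> A \<subseteq> X"
    and fin: "\<forall>\<epsilon>>0. finite {A\<in>\<A>. diameter A > \<epsilon>}"
    and card3: "\<forall>A\<in>\<A>. infinite A \<or> 2 < card A"
    and hom: "\<forall>i. homeomorphism X X (F i) (Finv i)"
    and img: "\<forall>i. \<forall>C\<in>\<A>. F i ` C \<in> \<A>"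
    and AA: "A \<in> \<A>" and BA: "B \<in> \<A>" and invA: "\<forall>i. F i ` A = A" and invB: "\<forall>i. F i ` B = B"
    and convA: "convergence_sequence_on A F c p" and convB: "convergence_sequence_on B F c p'"
    and P5: "\<forall>b\<in>B - {c}. \<exists>L. L \<noteq> [] \<and> set L \<subseteq> \<A> \<and> crossing_sequence X (A # L @ [B]) \<and>
               (\<forall>Ai\<in>set L. {b, c} \<inter> Ai = {})"
  shows "p = p'"
proof -
  have BX: "B \<subseteq> X" using AX BA by blast
  obtain b1 b2 b3 where b: "b1 \<in> B" "b2 \<in> B" "b3 \<in> B" "b1 \<noteq> b2" "b1 \<noteq> b3" "b2 \<noteq> b3"
    using three_points card3 BA by metis
  have exb: "\<exists>b. b \<in> B - {c}" using b by blast
  have inj: "\<And>i x y. x \<in> X \<Longrightarrow> y \<in> X \<Longrightarrow> F i x = F i y \<Longrightarrow> x = y"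
    using hom homeo_inj unfolding inj_on_def by blast
  show ?thesis
  proof (cases "\<exists>y\<in>B. infinite {i. F i y = p'}")
    case True
    then obtain y where y: "y \<in> B" "infinite {i. F i y = p'}" by blast
    then obtain r0 :: "nat \<Rightarrow> nat" where r0: "strict_mono r0" "\<And>i. F (r0 i) y = p'" using inf_subseq by blast
    obtain b where b: "b \<in> B - {c}" "y \<in> {b, c}"
    proof (cases "y = c")
      case True
      then show ?thesis using that exb by blast
    next
      case False
      then show ?thesis using that y by blast
    qed
    obtain L where L: "L \<noteq> []" "set L \<subseteq> \<A>" "crossing_sequence X (A # L @ [B])" "\<forall>Ai\<in>set L. {b, c} \<inter> Ai = {}"
      using P5 b(1) by blast
    define G where "G = (\<lambda>i. F (r0 i))"
    define Ginv where "Ginv = (\<lambda>i. Finv (r0 i))"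
    have HK: "\<forall>y'\<in>B. y' \<in> \<Union>(set L) \<longrightarrow> finite {i. G i y' = p'}"
    proof (intro ballI impI)
      fix y' assume y': "y' \<in> B" "y' \<in> \<Union>(set L)"
      have "{i. G i y' = p'} = {}"
      proof (rule ccontr)
        assume "{i. G i y' = p'} \<noteq> {}"
        then obtain i where "F (r0 i) y' = p'" unfolding G_def by blast
        then have "F (r0 i) y' = F (r0 i) y" using r0(2) by simp
        then have "y' = y" using inj y'(1) y(1) BX by blast
        then show False using y' b(2) L(4) by blast
      qed
      then show "finite {i. G i y' = p'}" by simp
    qed
    show ?thesis
    proof (rule GCL[OF cX lc AX fin card3, of G Ginv A B c p c p' L])
      show "\<forall>i. homeomorphism X X (G i) (Ginv i)" using hom G_def Ginv_def by simp
      show "\<forall>i. \<forall>C\<in>\<A>. G i ` C \<in> \<A>" using img G_def by simp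
      show "\<forall>i. G i ` A = A" "\<forall>i. G i ` B = B" using invA invB G_def by simp_all
      show "convergence_sequence_on A G c p" using conv_subseq[OF convA r0(1)] G_def by simp
      show "convergence_sequence_on B G c p'" using conv_subseq[OF convB r0(1)] G_def by simp
      show "\<forall>C\<in>set L. c \<notin> C \<and> c \<notin> C" using L(4) by blast
    qed (use AA BA L HK in auto)
  next
    case False
    then have HK: "\<forall>y'\<in>B. y' \<in> \<Union>(set L) \<longrightarrow> finite {i. F i y' = p'}" for L by blast
    obtain b where b: "b \<in> B - {c}" using exb by blast
    obtain L where L: "L \<noteq> []" "set L \<subseteq> \<A>" "crossing_sequence X (A # L @ [B])" "\<forall>Ai\<in>set L. {b, c} \<inter> Ai = {}"
      using P5 b(1) by blast
    show ?thesis
      by (rule GCL[OF cX lc AX fin card3 hom img AA BA invA invB convA convB L(1,2,3) _ HK]) (use L(4) in blast)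
  qed
qed

lemma conv_union:
  assumes "sets_converge_to S q" "sets_converge_to T q"
  shows "sets_converge_to (\<lambda>i. S i \<union> T i) q"
  unfolding sets_converge_to_def
proof (intro allI impI)
  fix U assume U: "open U \<and> q \<in> U"
  obtain N1 where "\<forall>i\<ge>N1. S i \<subseteq> U" using assms(1) U unfolding sets_converge_to_def by blast
  moreover obtain N2 where "\<forall>i\<ge>N2. T i \<subseteq> U" using assms(2) U unfolding sets_converge_to_def by blast
  ultimately have "\<forall>i\<ge>max N1 N2. S i \<union> T i \<subseteq> U" by simp
  then show "\<exists>N. \<forall>i\<ge>N. S i \<union> T i \<subseteq> U" by blast
qed

theorem theorem4p7:
  fixes X :: "'a::metric_space set" and G :: "('g, 'm) monoid_scheme"
    and act :: "'g \<Rightarrow> 'a \<Rightarrow> 'a" and \<A> :: "'a set set"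
    and A B :: "'a set" and f :: "nat \<Rightarrow> 'g" and n p :: 'a
  assumes "local_convergence_pairing X G act \<A>"
    and "A \<in> \<A>" and "B \<in> \<A>" and "A \<inter> B \<noteq> {}"
    and "acts_as_convergence_sequence G act A f n p"
    and "\<exists>n' p'. acts_as_convergence_sequence G act B f n' p'"
  shows "acts_as_convergence_sequence G act B f n p"
proof -
  note lcp = assms(1)[unfolded local_convergence_pairing_def]
  have peano: "peano_continuum X" using lcp[THEN conjunct1] .
  have homs: "acts_by_homeos G act X" using lcp[THEN conjunct2, THEN conjunct2, THEN conjunct1] .
  have AX: "\<forall>A\<in>\<A>. closed A \<and> A \<subseteq> X" using lcp[THEN conjunct2, THEN conjunct2, THEN conjunct2, THEN conjunct1] .
  have imgG: "\<forall>g\<in>carrier G. \<forall>A\<in>\<A>. act g ` A \<in> \<A>" using lcp[THEN conjunct2, THEN conjunct2, THEN conjunct2, THEN conjunct2, THEN conjunct1] .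
  have card3: "\<forall>A\<in>\<A>. infinite A \<or> 2 < card A" using lcp[THEN conjunct2, THEN conjunct2, THEN conjunct2, THEN conjunct2, THEN conjunct2, THEN conjunct1] .
  have fin: "\<forall>\<epsilon>>0. finite {A\<in>\<A>. diameter A > \<epsilon>}" using lcp[THEN conjunct2, THEN conjunct2, THEN conjunct2, THEN conjunct2, THEN conjunct2, THEN conjunct2, THEN conjunct1] .
  note P5all = lcp[THEN conjunct2, THEN conjunct2, THEN conjunct2, THEN conjunct2, THEN conjunct2, THEN conjunct2, THEN conjunct2, THEN conjunct2, THEN conjunct2]
  have cX: "compact X" and lc: "locally connected X" using peano unfolding peano_continuum_def by auto
  have grp: "group G" and homg: "\<forall>g\<in>carrier G. homeomorphism X X (act g) (act (inv\<^bsub>G\<^esub> g))"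
    using homs unfolding acts_by_homeos_def by auto
  have fS: "\<forall>i. f i \<in> Stab G act A" and convA0: "convergence_sequence_on A (\<lambda>i. act (f i)) n p"
    using assms(5) unfolding acts_as_convergence_sequence_def by auto
  obtain n' p' where fSB: "\<forall>i. f i \<in> Stab G act B" and convB0: "convergence_sequence_on B (\<lambda>i. act (f i)) n' p'"
    using assms(6) unfolding acts_as_convergence_sequence_def by auto
  define F where "F = (\<lambda>i. act (f i))"
  define Finv where "Finv = (\<lambda>i. act (inv\<^bsub>G\<^esub> (f i)))"
  have fC: "\<And>i. f i \<in> carrier G" using fS unfolding Stab_def by blast
  have fiC: "\<And>i. inv\<^bsub>G\<^esub> (f i) \<in> carrier G" using fC group.inv_closed[OF grp] by blast
  have hom: "\<forall>i. homeomorphism X X (F i) (Finv i)" using homg fC F_def Finv_def by simp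
  have homi: "\<forall>i. homeomorphism X X (Finv i) (F i)" using hom homeomorphism_sym by blast
  have img: "\<forall>i. \<forall>C\<in>\<A>. F i ` C \<in> \<A>" using imgG fC F_def by simp
  have imgi: "\<forall>i. \<forall>C\<in>\<A>. Finv i ` C \<in> \<A>" using imgG fiC Finv_def by simp
  have invA: "\<forall>i. F i ` A = A" using fS F_def unfolding Stab_def by simp
  have invB: "\<forall>i. F i ` B = B" using fSB F_def unfolding Stab_def by simp
  have convA: "convergence_sequence_on A F n p" using convA0 F_def by simp
  have convB: "convergence_sequence_on B F n' p'" using convB0 F_def by simp
  have AXs: "A \<subseteq> X" "B \<subseteq> X" "closed A" "closed B" using AX assms(2,3) by auto
  have cAB: "compact A" "compact B" using AXs cX compact_Int_closed[of X A] compact_Int_closed[of X B]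
    by (simp_all add: Int_absorb1)
  have inj: "\<And>i x y. x \<in> X \<Longrightarrow> y \<in> X \<Longrightarrow> F i x = F i y \<Longrightarrow> x = y"
    using hom homeo_inj unfolding inj_on_def by blast
  define I where "I = A \<inter> B"
  have IX: "I \<subseteq> X" using I_def AXs by blast
  have cI: "compact I" unfolding I_def using cAB(1) AXs(4) by (rule compact_Int_closed)
  have invI: "\<And>i. F i ` I = I"
  proof -
    fix i
    have "inj_on (F i) X" using homeo_inj hom by blast
    then have "F i ` (A \<inter> B) = F i ` A \<inter> F i ` B" using inj_on_image_Int AXs by blast
    then show "F i ` I = I" using invA invB I_def by simp
  qed
  have nA: "n \<in> A" "p \<in> A" using convA unfolding convergence_sequence_on_def by auto
  have nB: "n' \<in> B" "p' \<in> B" using convB unfolding convergence_sequence_on_def by auto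
  have F1: "\<And>x. x \<in> I \<Longrightarrow> x \<noteq> n \<Longrightarrow> x \<noteq> n' \<Longrightarrow> p = p'"
  proof -
    fix x assume x: "x \<in> I" "x \<noteq> n" "x \<noteq> n'"
    have "(\<lambda>i. F i x) \<longlonglongrightarrow> p" using point_conv[OF convA] x I_def by blast
    moreover have "(\<lambda>i. F i x) \<longlonglongrightarrow> p'" using point_conv[OF convB] x I_def by blast
    ultimately show "p = p'" using LIMSEQ_unique by blast
  qed
  have F2: "\<And>x y. p = p' \<Longrightarrow> x \<in> I \<Longrightarrow> y \<in> I \<Longrightarrow> x \<noteq> y \<Longrightarrow> n = n'"
  proof (rule ccontr)
    fix x y assume pp: "p = p'" and xy: "x \<in> I" "y \<in> I" "x \<noteq> y" and nn: "n \<noteq> n'"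
    define \<rho> where "\<rho> = dist n n' / 2"
    have \<rho>: "\<rho> > 0" using nn unfolding \<rho>_def by simp
    define K1 where "K1 = I \<inter> - ball n \<rho>"
    define K2 where "K2 = I \<inter> - ball n' \<rho>"
    have cK: "compact K1" "compact K2" unfolding K1_def K2_def using cI
      by (simp_all add: compact_Int_closed closed_Compl)
    have "K1 \<subseteq> A - {n}" unfolding K1_def I_def using \<rho> by auto
    then have s1: "sets_converge_to (\<lambda>i. F i ` K1) p" using convA cK unfolding convergence_sequence_on_def by blast
    have "K2 \<subseteq> B - {n'}" unfolding K2_def I_def using \<rho> by auto
    then have s2: "sets_converge_to (\<lambda>i. F i ` K2) p" using convB cK pp unfolding convergence_sequence_on_def by blast
    have IK: "I = K1 \<union> K2"
    proof -
      have "\<And>w. w \<in> ball n \<rho> \<Longrightarrow> w \<in> ball n' \<rho> \<Longrightarrow> False"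
      proof -
        fix w assume "w \<in> ball n \<rho>" "w \<in> ball n' \<rho>"
        then have "dist n w < \<rho>" "dist n' w < \<rho>" by auto
        then have "dist n n' < 2 * \<rho>" using dist_triangle3[of n n' w] dist_commute[of w n] dist_commute[of w n'] by linarith
        then show False unfolding \<rho>_def by simp
      qed
      then show ?thesis unfolding K1_def K2_def by blast
    qed
    have "sets_converge_to (\<lambda>i. F i ` K1 \<union> F i ` K2) p" using conv_union[OF s1 s2] .
    moreover have "\<And>i. F i ` K1 \<union> F i ` K2 = I" using invI IK by (metis image_Un)
    ultimately have sI: "sets_converge_to (\<lambda>i. I) p" by simp
    have "x = p" using sets_conv_const_point[OF sI, of x] xy by blast
    moreover have "y = p" using sets_conv_const_point[OF sI, of y] xy by blast
    ultimately show False using xy by simp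
  qed
  have key: "n' = n \<and> p' = p"
  proof -
    obtain x0 where x0: "x0 \<in> I" using assms(4) I_def by blast
    show ?thesis
    proof (cases "\<exists>y\<in>I. y \<noteq> x0")
      case True
      then obtain y0 where y0: "y0 \<in> I" "y0 \<noteq> x0" by blast
      show ?thesis
      proof (cases "\<exists>z\<in>I. z \<noteq> n \<and> z \<noteq> n'")
        case True
        then have "p = p'" using F1 by blast
        moreover then have "n = n'" using F2 x0 y0 by blast
        ultimately show ?thesis by simp
      next
        case False
        then have Isub: "I \<subseteq> {n, n'}" by blast
        then have nn: "n \<noteq> n'" using x0 y0 by blast
        have Ieq: "I = {n, n'}" using Isub x0 y0 by blast
        have finI: "finite I" "card I = 2" using Ieq nn by simp_all
        then have "\<exists>L. L \<noteq> [] \<and> set L \<subseteq> \<A> \<and> crossing_sequence X (A # L @ [B]) \<and>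
               (\<forall>Ai\<in>set L. (A \<inter> B) \<inter> Ai = {})"
          using P5all assms(2,3) I_def by simp
        then obtain L where L: "L \<noteq> []" "set L \<subseteq> \<A>" "crossing_sequence X (A # L @ [B])"
            "\<forall>Ai\<in>set L. I \<inter> Ai = {}" using I_def by blast
        have pI: "p' \<in> I"
        proof -
          have nI: "n \<in> I" using Ieq by simp
          have "(\<lambda>i. F i n) \<longlonglongrightarrow> p'" using point_conv[OF convB] nI nn I_def by blast
          moreover have "\<forall>i. F i n \<in> I" using invI nI by blast
          ultimately show ?thesis using limit_in_closed[OF finite_imp_closed[OF finI(1)], of "\<lambda>i. F i n"] by blast
        qed
        have HK: "\<forall>y\<in>B. y \<in> \<Union>(set L) \<longrightarrow> finite {i. F i y = p'}"
        proof (intro ballI impI)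
          fix y assume y: "y \<in> B" "y \<in> \<Union>(set L)"
          have "{i. F i y = p'} = {}"
          proof (rule ccontr)
            assume "{i. F i y = p'} \<noteq> {}"
            then obtain i where i: "F i y = p'" by blast
            then have "p' \<in> F i ` I" using invI pI by simp
            then obtain z where z: "z \<in> I" "F i z = F i y" using i by auto
            then have "z = y" using inj IX y AXs by blast
            then show False using z y L(4) by blast
          qed
          then show "finite {i. F i y = p'}" by simp
        qed
        have "p = p'"
          by (rule GCL[OF cX lc AX fin card3 hom img assms(2,3) invA invB convA convB L(1,2,3) _ HK])
            (use L(4) Ieq in blast)
        moreover then have "n = n'" using F2 x0 y0 by blast
        ultimately show ?thesis by simp
      qed
    next
      case False
      then have Ic: "I = {x0}" using x0 by blast
      define c where "c = x0"
      have Ic': "A \<inter> B = {c}" using Ic I_def c_def by simp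
      have Fc: "\<And>i. F i c = c"
      proof -
        fix i
        have "F i ` {c} = {c}" using invI[of i] Ic c_def by simp
        then show "F i c = c" by simp
      qed
      have cA: "c \<in> A" "c \<in> B" using Ic' by auto
      have hc1: "c = n \<or> c = p"
      proof (cases "c = n")
        case True then show ?thesis by simp
      next
        case False
        then have "c \<noteq> n" .
        then have "(\<lambda>i. F i c) \<longlonglongrightarrow> p" using point_conv[OF convA] cA by blast
        then have "(\<lambda>i. c) \<longlonglongrightarrow> p" using Fc by simp
        then have "c = p" using LIMSEQ_unique tendsto_const by blast
        then show ?thesis by simp
      qed
      have hc2: "c = n' \<or> c = p'"
      proof (cases "c = n'")
        case True then show ?thesis by simp
      next
        case False
        then have "c \<noteq> n'" .
        then have "(\<lambda>i. F i c) \<longlonglongrightarrow> p'" using point_conv[OF convB] cA by blast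
        then have "(\<lambda>i. c) \<longlonglongrightarrow> p'" using Fc by simp
        then have "c = p'" using LIMSEQ_unique tendsto_const by blast
        then show ?thesis by simp
      qed
      have P5AB: "\<forall>b\<in>B - {c}. \<exists>L. L \<noteq> [] \<and> set L \<subseteq> \<A> \<and> crossing_sequence X (A # L @ [B]) \<and>
               (\<forall>Ai\<in>set L. {b, c} \<inter> Ai = {})"
        using P5all assms(2,3) Ic' by simp
      have Ic'': "B \<inter> A = {c}" using Ic' by blast
      have P5BA: "\<forall>b\<in>A - {c}. \<exists>L. L \<noteq> [] \<and> set L \<subseteq> \<A> \<and> crossing_sequence X (B # L @ [A]) \<and>
               (\<forall>Ai\<in>set L. {b, c} \<inter> Ai = {})"
        using P5all assms(2,3) Ic'' by simp
      have HKc: "\<And>L y. c \<notin> \<Union>(set L) \<Longrightarrow> y \<in> X \<Longrightarrow> y \<in> \<Union>(set L) \<Longrightarrow> finite {i. F i y = c}"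
      proof -
        fix L y assume L: "c \<notin> \<Union>(set L)" and y: "y \<in> X" "y \<in> \<Union>(set L)"
        have "{i. F i y = c} = {}"
        proof (rule ccontr)
          assume "{i. F i y = c} \<noteq> {}"
          then obtain i where "F i y = c" by blast
          then have "F i y = F i c" using Fc by simp
          then have "y = c" using inj y(1) cA AXs by blast
          then show False using L y by blast
        qed
        then show "finite {i. F i y = c}" by simp
      qed
      consider (i) "n = c" "n' = c" | (ii) "p = c" "p' = c" | (iii) "n = c" "p' = c" "n' \<noteq> c" "p \<noteq> c"
        | (iv) "p = c" "n' = c" "n \<noteq> c" "p' \<noteq> c"
        using hc1 hc2 by argo
      then show ?thesis
      proof cases
        case i
        have "p = p'"
          using common_repeller[OF cX lc AX fin card3 hom img assms(2,3) invA invB _ _ P5AB] convA convB i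
          by simp
        then show ?thesis using i by simp
      next
        case ii
        have ciA: "\<forall>i. Finv i ` A = A" "convergence_sequence_on A Finv p n"
          using conv_inverse[OF hom AXs(1) cAB(1) invA convA] by auto
        have ciB: "\<forall>i. Finv i ` B = B" "convergence_sequence_on B Finv p' n'"
          using conv_inverse[OF hom AXs(2) cAB(2) invB convB] by auto
        have "n = n'"
          using common_repeller[OF cX lc AX fin card3 homi imgi assms(2,3) ciA(1) ciB(1) _ _ P5AB] ciA(2) ciB(2) ii
          by simp
        then show ?thesis using ii by simp
      next
        case iii
        have "n' \<in> B - {c}" using nB iii by blast
        then obtain L where L: "L \<noteq> []" "set L \<subseteq> \<A>" "crossing_sequence X (A # L @ [B])"
            "\<forall>Ai\<in>set L. {n', c} \<inter> Ai = {}" using P5AB by blast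
        have HK: "\<forall>y\<in>B. y \<in> \<Union>(set L) \<longrightarrow> finite {i. F i y = p'}"
          using HKc[of L] L(4) AXs(2) iii by blast
        have "p = p'"
          by (rule GCL[OF cX lc AX fin card3 hom img assms(2,3) invA invB convA convB L(1,2,3) _ HK])
            (use L(4) iii in blast)
        then show ?thesis using iii by simp
      next
        case iv
        have "n \<in> A - {c}" using nA iv by blast
        then obtain L where L: "L \<noteq> []" "set L \<subseteq> \<A>" "crossing_sequence X (B # L @ [A])"
            "\<forall>Ai\<in>set L. {n, c} \<inter> Ai = {}" using P5BA by blast
        have HK: "\<forall>y\<in>A. y \<in> \<Union>(set L) \<longrightarrow> finite {i. F i y = p}"
          using HKc[of L] L(4) AXs(1) iv by blast
        have "p' = p"
          by (rule GCL[OF cX lc AX fin card3 hom img assms(3,2) invB invA convB convA L(1,2,3) _ HK])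
            (use L(4) iv in blast)
        then show ?thesis using iv by simp
      qed
    qed
  qed
  show ?thesis
    unfolding acts_as_convergence_sequence_def using fSB convB0 key by simp
qed

end
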